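(* Let $(X,T)$ and $(Y,S)$ be dynamical systems. The following are equivalent: (1) $(X,T)$ and $(Y,S)$ are weakly disjoint; (2) both $\mathrm{Tran}_{k\mathcal{N}_S}(X,T)$ and $\mathrm{Tran}_{k\mathcal{N}_T}(Y,S)$ are dense $G_\delta$ subsets (of $X$ and $Y$ respectively); (3) $\mathrm{Tran}_{k\mathcal{N}_S}(X,T)$ is a dense $G_\delta$ subset of $X$; (4) both $\mathrm{Tran}_{k\mathcal{N}_S}(X,T)$ and $\mathrm{Tran}_{k\mathcal{N}_T}(Y,S)$ are nonempty; (5) $\mathrm{Tran}_{k\mathcal{N}_S}(X,T)$ is nonempty.
   Context: A dynamical system $(X,T)$: $X$ is a compact metric space with more than one point and without isolated points, $T:X\to X$ a continuous surjection. "Opene" means open and nonempty. $N_T(U,V)=\{n\in\mathbb{Z}_+:U\cap T^{-n}V\neq\varnothing\}$; $\mathcal{N}_T$ is the family of all subsets of $\mathbb{Z}_+$ containing $N_T(U,V)$ for some opene $U,V\subset X$ (similarly $\mathcal{N}_S$ for $(Y,S)$). For a family $\mathcal{F}$ of subsets of $\mathbb{Z}_+$, its dual is $k\mathcal{F}=\{F\subset\mathbb{Z}_+:F\cap F'\neq\varnothing\ \forall F'\in\mathcal{F}\}$. For $x\in X$ and $G\subset X$, $n_T(x,G)=\{n\in\mathbb{Z}_+:T^nx\in G\}$; $\mathrm{Tran}_{\mathcal{F}}(X,T)$ is the set of $x\in X$ with $n_T(x,U)\in\mathcal{F}$ for every opene $U\subset X$. $(X,T)$ and $(Y,S)$ are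 weakly disjoint if $(X\times Y,T\times S)$ is transitive, i.e. $N_{T\times S}(A,B)\neq\varnothing$ for all opene $A,B\subset X\times Y$. *)

theory Defs
  imports "HOL-Analysis.Analysis"
begin

definition dyn_sys :: "'a::metric_space set \<Rightarrow> ('a \<Rightarrow> 'a) \<Rightarrow> bool" where
  "dyn_sys X T \<longleftrightarrow> compact X \<and> (\<exists>x\<in>X. \<exists>y\<in>X. x \<noteq> y) \<and> (\<forall>x\<in>X. x islimpt X)
     \<and> continuous_on X T \<and> T ` X = X"

definition opene :: "'a::topological_space set \<Rightarrow> 'a set \<Rightarrow> bool" where
  "opene X U \<longleftrightarrow> openin (top_of_set X) U \<and> U \<noteq> {}"

definition hit_times :: "('a \<Rightarrow> 'a) \<Rightarrow> 'a set \<Rightarrow> 'a set \<Rightarrow> nat set" where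
  "hit_times T U V = {n. \<exists>x\<in>U. (T ^^ n) x \<in> V}"

definition hit_family :: "'a::topological_space set \<Rightarrow> ('a \<Rightarrow> 'a) \<Rightarrow> nat set set" where
  "hit_family X T = {F. \<exists>U V. opene X U \<and> opene X V \<and> hit_times T U V \<subseteq> F}"

definition dual_family :: "nat set set \<Rightarrow> nat set set" where
  "dual_family \<F> = {F. \<forall>F'\<in>\<F>. F \<inter> F' \<noteq> {}}"

definition visit_times :: "('a \<Rightarrow> 'a) \<Rightarrow> 'a \<Rightarrow> 'a set \<Rightarrow> nat set" where
  "visit_times T x G = {n. (T ^^ n) x \<in> G}"

definition Tran :: "nat set set \<Rightarrow> 'a::topological_space set \<Rightarrow> ('a \<Rightarrow> 'a) \<Rightarrow> 'a set" where
  "Tran \<F> X T = {x\<in>X. \<forall>U. opene X U \<longrightarrow> visit_times T x U \<in> \<F>}"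

definition weakly_disjoint :: "'a::topological_space set \<Rightarrow> ('a \<Rightarrow> 'a) \<Rightarrow>
    'b::topological_space set \<Rightarrow> ('b \<Rightarrow> 'b) \<Rightarrow> bool" where
  "weakly_disjoint X T Y S \<longleftrightarrow>
     (\<forall>A B. opene (X \<times> Y) A \<longrightarrow> opene (X \<times> Y) B \<longrightarrow>
        hit_times (\<lambda>(x, y). (T x, S y)) A B \<noteq> {})"

definition dense_gdelta :: "'a::topological_space set \<Rightarrow> 'a set \<Rightarrow> bool" where
  "dense_gdelta X D \<longleftrightarrow> D \<subseteq> X \<and> (top_of_set X) closure_of D = X \<and> gdelta_in (top_of_set X) D"

end

theory Submission
  imports Defs
begin

definition wdbox :: "'a::topological_space set \<Rightarrow> ('a \<Rightarrow> 'a) \<Rightarrow> 'b::topological_space set \<Rightarrow> ('b \<Rightarrow> 'b) \<Rightarrow> bool" where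
  "wdbox X T Y S \<longleftrightarrow> (\<forall>U1 U2 V1 V2. opene X U1 \<longrightarrow> opene X U2 \<longrightarrow> opene Y V1 \<longrightarrow> opene Y V2 \<longrightarrow>
     (\<exists>n. \<exists>x\<in>U1. \<exists>y\<in>V1. (T^^n) x \<in> U2 \<and> (S^^n) y \<in> V2))"

lemma funpow_prod:
  fixes T :: "'a \<Rightarrow> 'a" and S :: "'b \<Rightarrow> 'b"
  shows "((\<lambda>(x, y). (T x, S y))^^n) (x, y) = ((T^^n) x, (S^^n) y)"
  by (induction n) auto

lemma opene_box:
  assumes "opene (X \<times> Y) A"
  obtains U V where "opene X U" "opene Y V" "U \<times> V \<subseteq> A"
proof -
  from assms obtain G0 where O: "open G0" "A = G0 \<inter> (X \<times> Y)" and ne: "A \<noteq> {}"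
    unfolding opene_def openin_open by blast
  then obtain a b where ab: "(a, b) \<in> A" by auto
  with O obtain A' B' where "open A'" "open B'" "(a,b) \<in> A' \<times> B'" "A' \<times> B' \<subseteq> G0"
    by (metis IntD1 open_prod_elim)
  then show ?thesis
    using O ab
    by (intro that[of "X \<inter> A'" "Y \<inter> B'"]) (auto simp: opene_def openin_open_Int)
qed

lemma wd_iff_box: "weakly_disjoint X T Y S \<longleftrightarrow> wdbox X T Y S"
proof
  assume wd: "weakly_disjoint X T Y S"
  show "wdbox X T Y S"
    unfolding wdbox_def
  proof (intro allI impI)
    fix U1 U2 V1 V2
    assume h: "opene X U1" "opene X U2" "opene Y V1" "opene Y V2"
    have "opene (X \<times> Y) (U1 \<times> V1)" "opene (X \<times> Y) (U2 \<times> V2)"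
      using h by (auto simp: opene_def openin_Times)
    with wd have "hit_times (\<lambda>(x, y). (T x, S y)) (U1 \<times> V1) (U2 \<times> V2) \<noteq> {}"
      unfolding weakly_disjoint_def by blast
    then obtain n where "n \<in> hit_times (\<lambda>(x, y). (T x, S y)) (U1 \<times> V1) (U2 \<times> V2)"
      by blast
    then have "\<exists>p\<in>U1 \<times> V1. ((\<lambda>(x, y). (T x, S y))^^n) p \<in> U2 \<times> V2"
      unfolding hit_times_def mem_Collect_eq .
    then obtain p where "p \<in> U1 \<times> V1" "((\<lambda>(x, y). (T x, S y))^^n) p \<in> U2 \<times> V2"
      by (rule bexE)
    then show "\<exists>n. \<exists>x\<in>U1. \<exists>y\<in>V1. (T^^n) x \<in> U2 \<and> (S^^n) y \<in> V2"
      by (cases p) (auto simp: funpow_prod)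
  qed
next
  assume b: "wdbox X T Y S"
  show "weakly_disjoint X T Y S"
    unfolding weakly_disjoint_def
  proof (intro allI impI)
    fix A B
    assume a: "opene (X \<times> Y) A" and bb: "opene (X \<times> Y) B"
    obtain U1 V1 where h1: "opene X U1" "opene Y V1" "U1 \<times> V1 \<subseteq> A"
      by (rule opene_box[OF a])
    obtain U2 V2 where h2: "opene X U2" "opene Y V2" "U2 \<times> V2 \<subseteq> B"
      by (rule opene_box[OF bb])
    have "\<exists>n. \<exists>x\<in>U1. \<exists>y\<in>V1. (T^^n) x \<in> U2 \<and> (S^^n) y \<in> V2"
      using b h1 h2 unfolding wdbox_def by simp
    then obtain n x y where xy: "x \<in> U1" "y \<in> V1" "(T^^n) x \<in> U2" "(S^^n) y \<in> V2"
      by blast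
    have "(x, y) \<in> A" using xy h1 by auto
    moreover have "((\<lambda>(x, y). (T x, S y))^^n) (x, y) \<in> B"
      using xy h2 by (auto simp: funpow_prod)
    ultimately have "\<exists>p\<in>A. ((\<lambda>(x, y). (T x, S y))^^n) p \<in> B"
      by (intro bexI[of _ "(x,y)"])
    then have "n \<in> hit_times (\<lambda>(x, y). (T x, S y)) A B"
      unfolding hit_times_def by simp
    then show "hit_times (\<lambda>(x, y). (T x, S y)) A B \<noteq> {}" by auto
  qed
qed

lemma tran_char:
  "x \<in> Tran (dual_family (hit_family Y S)) X T \<longleftrightarrow> x \<in> X \<and>
    (\<forall>U V W. opene X U \<longrightarrow> opene Y V \<longrightarrow> opene Y W \<longrightarrow> (\<exists>n. (T^^n) x \<in> U \<and> (\<exists>y\<in>V. (S^^n) y \<in> W)))"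
  (is "?L \<longleftrightarrow> ?R")
proof
  assume L: ?L
  then have xX: "x \<in> X" and h: "\<And>U. opene X U \<Longrightarrow> visit_times T x U \<in> dual_family (hit_family Y S)"
    unfolding Tran_def by auto
  have "\<exists>n. (T^^n) x \<in> U \<and> (\<exists>y\<in>V. (S^^n) y \<in> W)"
    if hh: "opene X U" "opene Y V" "opene Y W" for U V W
  proof -
    have "hit_times S V W \<in> hit_family Y S" unfolding hit_family_def using hh by blast
    then have "visit_times T x U \<inter> hit_times S V W \<noteq> {}"
      using h[OF hh(1)] unfolding dual_family_def by blast
    then obtain n where "n \<in> visit_times T x U" "n \<in> hit_times S V W" by blast
    then show ?thesis unfolding visit_times_def hit_times_def by blast
  qed
  then show ?R using xX by blast
next
  assume R: ?R
  show ?L unfolding Tran_def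
  proof (intro CollectI conjI allI impI)
    show "x \<in> X" using R by blast
    fix U assume U: "opene X U"
    show "visit_times T x U \<in> dual_family (hit_family Y S)"
      unfolding dual_family_def
    proof (intro CollectI ballI)
      fix F' assume "F' \<in> hit_family Y S"
      then obtain V W where VW: "opene Y V" "opene Y W" "hit_times S V W \<subseteq> F'"
        unfolding hit_family_def by blast
      then obtain n where n: "(T^^n) x \<in> U" "\<exists>y\<in>V. (S^^n) y \<in> W" using R U by blast
      then have "n \<in> visit_times T x U" "n \<in> F'"
        using VW(3) unfolding visit_times_def hit_times_def by auto
      then show "visit_times T x U \<inter> F' \<noteq> {}" by blast
    qed
  qed
qed

lemma dyn_iter:
  assumes "dyn_sys X T"
  shows "continuous_on X (T^^m) \<and> (T^^m) ` X = X"
proof (induction m)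
  case 0 then show ?case by (simp add: continuous_on_id)
next
  case (Suc m)
  have c: "continuous_on X T" "T ` X = X" using assms by (auto simp: dyn_sys_def)
  have e: "T^^Suc m = T \<circ> (T^^m)" by simp
  have "continuous_on X (T \<circ> (T^^m))"
    using Suc c by (intro continuous_on_compose) auto
  moreover have "(T \<circ> (T^^m)) ` X = X"
    using Suc c by (simp only: image_comp[symmetric])
  ultimately show ?case by (simp only: e)
qed

lemma tran_imp_box:
  assumes dX: "dyn_sys X T" and dY: "dyn_sys Y S"
    and x: "x \<in> Tran (dual_family (hit_family Y S)) X T"
  shows "wdbox X T Y S"
  unfolding wdbox_def
proof (intro allI impI)
  fix U1 U2 V1 V2
  assume h: "opene X U1" "opene X U2" "opene Y V1" "opene Y V2"
  have xc: "x \<in> X" "\<And>U V W. opene X U \<Longrightarrow> opene Y V \<Longrightarrow> opene Y W \<Longrightarrow>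
      (\<exists>n. (T^^n) x \<in> U \<and> (\<exists>y\<in>V. (S^^n) y \<in> W))"
    using x unfolding tran_char by blast+
  have Yo: "opene Y Y" using dY by (auto simp: opene_def dyn_sys_def)
  obtain m where m: "(T^^m) x \<in> U1" using xc(2)[OF h(1) Yo Yo] by blast
  define U where "U = X \<inter> (T^^m) -` U2"
  have iX: "continuous_on X (T^^m)" "(T^^m) ` X = X" using dyn_iter[OF dX] by auto
  have "openin (top_of_set X) U"
  proof -
    have "(T^^m) \<in> X \<rightarrow> X" using iX by blast
    moreover have "openin (top_of_set X) U2" using h(2) by (simp add: opene_def)
    ultimately show ?thesis unfolding U_def by (rule continuous_openin_preimage[OF iX(1)])
  qed
  moreover have "U \<noteq> {}"
  proof -
    obtain u where u: "u \<in> U2" using h(2) by (auto simp: opene_def)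
    have "U2 \<subseteq> X" using h(2) unfolding opene_def by (metis openin_subset topspace_euclidean_subtopology)
    with u iX obtain z where "z \<in> X" "(T^^m) z = u" by (metis imageE subsetD)
    then show ?thesis using u unfolding U_def by blast
  qed
  ultimately have "opene X U" by (simp add: opene_def)
  then obtain k y where k: "(T^^k) x \<in> U" "y \<in> V1" "(S^^k) y \<in> V2"
    using xc(2)[OF _ h(3) h(4)] by blast
  have sw: "(T^^k) ((T^^m) x) = (T^^m) ((T^^k) x)"
    by (metis funpow_add add.commute comp_apply)
  have "(T^^k) ((T^^m) x) \<in> U2" using k(1) sw unfolding U_def by simp
  then show "\<exists>n. \<exists>x\<in>U1. \<exists>y\<in>V1. (T^^n) x \<in> U2 \<and> (S^^n) y \<in> V2"
    using m k by blast
qed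

lemma pibase:
  fixes X :: "'a::metric_space set"
  assumes "compact X"
  obtains P where "countable P" "\<forall>B\<in>P. opene X B" "\<forall>U. opene X U \<longrightarrow> (\<exists>B\<in>P. B \<subseteq> U)"
proof -
  have "\<exists>F. finite F \<and> X \<subseteq> (\<Union>c\<in>F. ball c (inverse (real (Suc k))))" for k :: nat
  proof -
    have "inverse (real (Suc k)) > 0" by simp
    then show ?thesis using assms compact_eq_totally_bounded by blast
  qed
  then obtain F where F: "\<And>k. finite (F k)" "\<And>k. X \<subseteq> (\<Union>c\<in>F k. ball c (inverse (real (Suc k))))"
    by metis
  define P where "P = {B. \<exists>k. \<exists>c\<in>F k. B = X \<inter> ball c (inverse (real (Suc k))) \<and> B \<noteq> {}}"
  have "P \<subseteq> (\<lambda>(k, c). X \<inter> ball c (inverse (real (Suc k)))) ` (SIGMA k:UNIV. F k)"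
    unfolding P_def by auto
  moreover have "countable (SIGMA k:UNIV. F k)"
    using F(1) by (intro countable_SIGMA) (auto intro: countable_finite)
  ultimately have "countable P" by (meson countable_image countable_subset)
  moreover have "\<forall>B\<in>P. opene X B"
    unfolding P_def opene_def by (auto intro: openin_open_Int)
  moreover have "\<forall>U. opene X U \<longrightarrow> (\<exists>B\<in>P. B \<subseteq> U)"
  proof (intro allI impI)
    fix U assume U: "opene X U"
    then obtain u where u: "u \<in> U" by (auto simp: opene_def)
    from U have "U \<subseteq> X \<and> (\<forall>x\<in>U. \<exists>e. 0 < e \<and> ball x e \<inter> X \<subseteq> U)"
      unfolding opene_def openin_contains_ball by blast
    with u obtain e where e: "e > 0" "ball u e \<inter> X \<subseteq> U" and uX: "u \<in> X" by blast
    obtain k where k: "inverse (real (Suc k)) < e / 2" using reals_Archimedean[of "e/2"] e by auto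
    obtain c where c: "c \<in> F k" "u \<in> ball c (inverse (real (Suc k)))" using F(2)[of k] uX by blast
    define B where "B = X \<inter> ball c (inverse (real (Suc k)))"
    have "B \<in> P" unfolding P_def B_def using c uX by blast
    moreover have "B \<subseteq> U"
    proof
      fix z assume z: "z \<in> B"
      have "dist u z \<le> dist u c + dist c z" by (rule dist_triangle)
      also have "\<dots> < e" using z c k by (simp add: B_def dist_commute)
      finally have "z \<in> ball u e" by simp
      then show "z \<in> U" using e z B_def by blast
    qed
    ultimately show "\<exists>B\<in>P. B \<subseteq> U" by blast
  qed
  ultimately show ?thesis using that by blast
qed


lemma box_imp_dense:
  assumes dX: "dyn_sys X T" and dY: "dyn_sys Y S" and b: "wdbox X T Y S"
  shows "dense_gdelta X (Tran (dual_family (hit_family Y S)) X T)"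
proof -
  have cX: "compact X" and cY: "compact Y" using dX dY by (auto simp: dyn_sys_def)
  obtain PX where PX: "countable PX" "\<forall>B\<in>PX. opene X B" "\<forall>U. opene X U \<longrightarrow> (\<exists>B\<in>PX. B \<subseteq> U)"
    using pibase[OF cX] by blast
  obtain PY where PY: "countable PY" "\<forall>B\<in>PY. opene Y B" "\<forall>U. opene Y U \<longrightarrow> (\<exists>B\<in>PY. B \<subseteq> U)"
    using pibase[OF cY] by blast
  define G where "G = (\<lambda>(B, C, D). {x\<in>X. \<exists>n. (T^^n) x \<in> B \<and> (\<exists>y\<in>C. (S^^n) y \<in> D)})"
  define GG where "GG = G ` (PX \<times> PY \<times> PY)"
  have Xo: "opene X X" using dX by (auto simp: opene_def dyn_sys_def)
  have Yo: "opene Y Y" using dY by (auto simp: opene_def dyn_sys_def)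
  obtain B0 where B0: "B0 \<in> PX" using PX(3) Xo by blast
  obtain C0 where C0: "C0 \<in> PY" using PY(3) Yo by blast
  have GGne: "GG \<noteq> {}" unfolding GG_def using B0 C0 by blast
  have cnt: "countable GG" unfolding GG_def using PX(1) PY(1) by auto
  have GsubX: "g \<subseteq> X" if "g \<in> GG" for g using that unfolding GG_def G_def by auto
  have eq: "Tran (dual_family (hit_family Y S)) X T = \<Inter>GG"
  proof (rule set_eqI)
    fix x
    show "x \<in> Tran (dual_family (hit_family Y S)) X T \<longleftrightarrow> x \<in> \<Inter>GG"
    proof
      assume "x \<in> Tran (dual_family (hit_family Y S)) X T"
      then have xc: "x \<in> X" "\<And>U V W. opene X U \<Longrightarrow> opene Y V \<Longrightarrow> opene Y W \<Longrightarrow>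
          (\<exists>n. (T^^n) x \<in> U \<and> (\<exists>y\<in>V. (S^^n) y \<in> W))"
        unfolding tran_char by blast+
      show "x \<in> \<Inter>GG"
      proof
        fix g assume "g \<in> GG"
        then obtain B C D where "B \<in> PX" "C \<in> PY" "D \<in> PY" "g = G (B, C, D)"
          unfolding GG_def by auto
        then show "x \<in> g" using xc PX(2) PY(2) unfolding G_def by auto
      qed
    next
      assume x: "x \<in> \<Inter>GG"
      have xX: "x \<in> X" using x GGne GsubX by blast
      have "\<exists>n. (T^^n) x \<in> U \<and> (\<exists>y\<in>V. (S^^n) y \<in> W)"
        if hUVW: "opene X U" "opene Y V" "opene Y W" for U V W
      proof -
        obtain B where B: "B \<in> PX" "B \<subseteq> U" using PX(3) hUVW(1) by blast
        obtain C where C: "C \<in> PY" "C \<subseteq> V" using PY(3) hUVW(2) by blast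
        obtain D where D: "D \<in> PY" "D \<subseteq> W" using PY(3) hUVW(3) by blast
        have "G (B, C, D) \<in> GG" unfolding GG_def using B C D by blast
        then have "x \<in> G (B, C, D)" using x by blast
        then show ?thesis unfolding G_def using B C D by blast
      qed
      then show "x \<in> Tran (dual_family (hit_family Y S)) X T"
        unfolding tran_char using xX by blast
    qed
  qed
  have op: "openin (top_of_set X) g" if "g \<in> GG" for g
  proof -
    obtain B C D where BCD: "B \<in> PX" "C \<in> PY" "D \<in> PY" "g = G (B, C, D)"
      using \<open>g \<in> GG\<close> unfolding GG_def by auto
    have "g = \<Union>((\<lambda>n. X \<inter> (T^^n) -` B) ` {n. \<exists>y\<in>C. (S^^n) y \<in> D})"
      unfolding BCD G_def by auto
    moreover have "openin (top_of_set X) (X \<inter> (T^^n) -` B)" for n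
    proof -
      have iX: "continuous_on X (T^^n)" "(T^^n) ` X = X" using dyn_iter[OF dX] by auto
      then have "(T^^n) \<in> X \<rightarrow> X" by blast
      moreover have "openin (top_of_set X) B" using BCD PX(2) by (simp add: opene_def)
      ultimately show ?thesis by (rule continuous_openin_preimage[OF iX(1)])
    qed
    ultimately show ?thesis by (simp only:) (rule openin_Union, blast)
  qed
  have dn: "(top_of_set X) closure_of g = topspace (top_of_set X)" if "g \<in> GG" for g
  proof -
    obtain B C D where BCD: "B \<in> PX" "C \<in> PY" "D \<in> PY" "g = G (B, C, D)"
      using \<open>g \<in> GG\<close> unfolding GG_def by auto
    have "g \<inter> U \<noteq> {}" if hU: "openin (top_of_set X) U" "U \<noteq> {}" for U
    proof -
      have "opene X U" using hU by (simp add: opene_def)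
      then obtain n x y where "x \<in> U" "y \<in> C" "(T^^n) x \<in> B" "(S^^n) y \<in> D"
        using b BCD PX(2) PY(2) unfolding wdbox_def by blast
      moreover have "x \<in> X" using \<open>x \<in> U\<close> hU(1) by (meson openin_imp_subset subsetD)
      ultimately have "x \<in> g \<inter> U" unfolding BCD G_def by auto
      then show ?thesis by blast
    qed
    then show ?thesis unfolding dense_intersects_open by blast
  qed
  have sp: "locally_compact_space (top_of_set X) \<and> regular_space (top_of_set X)"
  proof -
    have "compact_space (top_of_set X)" using cX by (simp add: compact_space_subtopology)
    moreover have "Hausdorff_space (top_of_set X)"
      by (simp add: Hausdorff_space_subtopology)
    ultimately show ?thesis
      by (simp add: compact_imp_locally_compact_space compact_Hausdorff_imp_regular_space)
  qed
  have "(top_of_set X) closure_of \<Inter>GG = topspace (top_of_set X)"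
    using sp cnt op dn by (intro Baire_category) auto
  moreover have "gdelta_in (top_of_set X) (\<Inter>GG)"
    using cnt GGne op by (intro gdelta_in_Inter open_imp_gdelta_in) auto
  moreover have "\<Inter>GG \<subseteq> X" using GGne GsubX by blast
  ultimately show ?thesis unfolding dense_gdelta_def eq by simp
qed

theorem theorem5p2:
  fixes X :: "'a::metric_space set" and T :: "'a \<Rightarrow> 'a"
    and Y :: "'b::metric_space set" and S :: "'b \<Rightarrow> 'b"
  assumes "dyn_sys X T" and "dyn_sys Y S"
  defines "TX \<equiv> Tran (dual_family (hit_family Y S)) X T"
      and "TY \<equiv> Tran (dual_family (hit_family X T)) Y S"
  shows "(weakly_disjoint X T Y S \<longleftrightarrow> dense_gdelta X TX \<and> dense_gdelta Y TY)
       \<and> (dense_gdelta X TX \<and> dense_gdelta Y TY \<longleftrightarrow> dense_gdelta X TX)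
       \<and> (dense_gdelta X TX \<longleftrightarrow> TX \<noteq> {} \<and> TY \<noteq> {})
       \<and> (TX \<noteq> {} \<and> TY \<noteq> {} \<longleftrightarrow> TX \<noteq> {})"
proof -
  have sym: "wdbox Y S X T \<longleftrightarrow> wdbox X T Y S" unfolding wdbox_def by blast
  have ne: "D \<noteq> {}" if "dense_gdelta Z D" "dyn_sys Z f" for Z :: "'c::metric_space set" and D f
  proof
    assume "D = {}"
    then have "Z = {}" using that(1) unfolding dense_gdelta_def by simp
    then show False using that(2) unfolding dyn_sys_def by blast
  qed
  have i12: "dense_gdelta X TX \<and> dense_gdelta Y TY" if "wdbox X T Y S"
    using box_imp_dense[OF assms(1,2) that] box_imp_dense[OF assms(2,1)] that sym
    unfolding TX_def TY_def by blast
  have i51: "wdbox X T Y S" if "TX \<noteq> {}"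
    using that tran_imp_box[OF assms(1,2)] unfolding TX_def by blast
  have n3: "TX \<noteq> {}" if "dense_gdelta X TX" using ne that assms(1) by blast
  have n4: "TY \<noteq> {}" if "dense_gdelta Y TY" using ne that assms(2) by blast
  show ?thesis using i12 i51 n3 n4 wd_iff_box[of X T Y S] by blast
qed

end
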